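(* Let $k\ge 1$, $\epsilon\in(0,1]$, and let $F=F_1\times\cdots\times F_n$ be a $k$-unit auction instance with quasi-regular distributions forming an $\epsilon$-large market, normalized so that $\mathrm{AP}(F)=1$. Let $\gamma$ be a constant such that $\mathrm{OPT}(G)\le\gamma\log k\cdot\mathrm{AP}(G)$ for every $k$-unit instance $G$ with quasi-regular distributions. Then for every price $p\ge\frac1k$ and every agent $i$, $F_i(p)\ge 1-\epsilon\cdot\gamma k\log k$.
   Context: A seller has $k$ identical units and $n$ unit-demand agents with independent private values $v_i\sim F_i$ ($F_i$ also denotes the CDF), utility $v_ix_i-p_i$. $\mathrm{OPT}(F)$ is the maximum expected revenue over Bayesian incentive compatible, interim individually rational mechanisms allocating at most $k$ units. An anonymous pricing mechanism with price $p$ offers $p$ to agents one at a time in an arbitrary order until units run out (agents with $v_i\ge p$ accept); $\mathrm{AP}(F)$ is the maximum over $p$ of its expected revenue. With virtual value $\phi_i(v)=v-\frac{1-F_i(v)}{f_i(v)}$, $F_i$ is quasi-regular if $\mathbb{E}_{\hat v\sim F_i}[\phi_i(\hat v)\mid\hat v\le v]$ is weakly increasing in $v$. With $v_i(q)=\inf\{v:F_i(v)\ge1-q\}$ and $R_i(q)=q\,v_i(q)$, the monopoly revenue of agent $i$ is $R_i(q_i^* )=\max_q R_i(q)$; $F$ is an $\epsilon$-large market if $R_i(q_i^* )\le\epsilon\cdot\mathrm{OPT}(F)$ for all $i$. *)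

theory Defs
  imports "HOL-Probability.Probability"
begin

definition cdf :: "real measure \<Rightarrow> real \<Rightarrow> real" where
  "cdf M v = measure M {..v}"

definition auction_instance :: "nat \<Rightarrow> (nat \<Rightarrow> real measure) \<Rightarrow> bool" where
  "auction_instance n M \<longleftrightarrow>
     (\<forall>i<n. prob_space (M i) \<and> sets (M i) = sets borel \<and> (AE v in M i. 0 \<le> v))"

abbreviation profile :: "nat \<Rightarrow> (nat \<Rightarrow> real measure) \<Rightarrow> (nat \<Rightarrow> real) measure" where
  "profile n M \<equiv> PiM {..<n} M"

definition virtual_value :: "real measure \<Rightarrow> (real \<Rightarrow> real) \<Rightarrow> real \<Rightarrow> real" where
  "virtual_value M f v = v - (1 - cdf M v) / f v"

definition cond_virtual :: "real measure \<Rightarrow> (real \<Rightarrow> real) \<Rightarrow> real \<Rightarrow> real" where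
  "cond_virtual M f v = (LINT t:{..v}|M. virtual_value M f t) / cdf M v"

definition quasi_regular :: "real measure \<Rightarrow> bool" where
  "quasi_regular M \<longleftrightarrow>
     (\<exists>f. f \<in> borel_measurable borel \<and> (\<forall>x. 0 \<le> f x) \<and>
          M = density lborel (\<lambda>x. ennreal (f x)) \<and>
          (\<forall>v. 0 < cdf M v \<longrightarrow> set_integrable M {..v} (virtual_value M f)) \<and>
          (\<forall>v w. 0 < cdf M v \<and> v \<le> w \<longrightarrow> cond_virtual M f v \<le> cond_virtual M f w))"

(* Direct revelation mechanisms: x i v = (expected) allocation probability of agent i,
   p i v = (expected) payment of agent i, at reported profile v. *)
definition feasible :: "nat \<Rightarrow> nat \<Rightarrow> (nat \<Rightarrow> (nat \<Rightarrow> real) \<Rightarrow> real) \<Rightarrow> bool" where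
  "feasible k n x \<longleftrightarrow> (\<forall>v. (\<forall>i<n. 0 \<le> x i v \<and> x i v \<le> 1) \<and> (\<Sum>i<n. x i v) \<le> real k)"

definition well_defined_mech :: "nat \<Rightarrow> (nat \<Rightarrow> real measure) \<Rightarrow>
    (nat \<Rightarrow> (nat \<Rightarrow> real) \<Rightarrow> real) \<Rightarrow> (nat \<Rightarrow> (nat \<Rightarrow> real) \<Rightarrow> real) \<Rightarrow> bool" where
  "well_defined_mech n M x p \<longleftrightarrow>
     (\<forall>i<n. x i \<in> borel_measurable (PiM {..<n} (\<lambda>_. borel)) \<and>
            p i \<in> borel_measurable (PiM {..<n} (\<lambda>_. borel)) \<and>
            integrable (profile n M) (p i) \<and>
            (\<forall>w. integrable (profile n M) (\<lambda>v. p i (v(i := w)))))"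

definition interim_util :: "nat \<Rightarrow> (nat \<Rightarrow> real measure) \<Rightarrow>
    (nat \<Rightarrow> (nat \<Rightarrow> real) \<Rightarrow> real) \<Rightarrow> (nat \<Rightarrow> (nat \<Rightarrow> real) \<Rightarrow> real) \<Rightarrow>
    nat \<Rightarrow> real \<Rightarrow> real \<Rightarrow> real" where
  "interim_util n M x p i w w' =
     (\<integral>v. w * x i (v(i := w')) - p i (v(i := w')) \<partial>profile n M)"

definition BIC_IIR :: "nat \<Rightarrow> (nat \<Rightarrow> real measure) \<Rightarrow>
    (nat \<Rightarrow> (nat \<Rightarrow> real) \<Rightarrow> real) \<Rightarrow> (nat \<Rightarrow> (nat \<Rightarrow> real) \<Rightarrow> real) \<Rightarrow> bool" where
  "BIC_IIR n M x p \<longleftrightarrow>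
     (\<forall>i<n. AE w in M i. 0 \<le> interim_util n M x p i w w \<and>
                         (\<forall>w'. interim_util n M x p i w w' \<le> interim_util n M x p i w w))"

definition revenue :: "nat \<Rightarrow> (nat \<Rightarrow> real measure) \<Rightarrow> (nat \<Rightarrow> (nat \<Rightarrow> real) \<Rightarrow> real) \<Rightarrow> real" where
  "revenue n M p = (\<integral>v. (\<Sum>i<n. p i v) \<partial>profile n M)"

definition OPT :: "nat \<Rightarrow> nat \<Rightarrow> (nat \<Rightarrow> real measure) \<Rightarrow> ereal" where
  "OPT k n M = (SUP xp \<in> {(x, p). feasible k n x \<and> well_defined_mech n M x p \<and> BIC_IIR n M x p}.
                  ereal (revenue n M (snd xp)))"

(* Revenue of anonymous pricing at price p: the price is offered sequentially until units
   run out; every agent with value >= p accepts, so exactly min k #{i. v_i >= p} units are sold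
   (independently of the order). *)
definition ap_revenue :: "nat \<Rightarrow> nat \<Rightarrow> (nat \<Rightarrow> real measure) \<Rightarrow> real \<Rightarrow> real" where
  "ap_revenue k n M q = q * (\<integral>v. real (min k (card {i\<in>{..<n}. q \<le> v i})) \<partial>profile n M)"

definition AP :: "nat \<Rightarrow> nat \<Rightarrow> (nat \<Rightarrow> real measure) \<Rightarrow> ereal" where
  "AP k n M = (SUP q. ereal (ap_revenue k n M q))"

definition quantile_value :: "real measure \<Rightarrow> real \<Rightarrow> real" where
  "quantile_value M q = Inf {v. cdf M v \<ge> 1 - q}"

definition rev_curve :: "real measure \<Rightarrow> real \<Rightarrow> real" where
  "rev_curve M q = q * quantile_value M q"

(* epsilon-large market: monopoly revenue max_q R_i(q) <= eps * OPT(F) for all i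
   (stated as a bound for every interior quantile, i.e. on the supremum) *)
definition large_market :: "real \<Rightarrow> nat \<Rightarrow> nat \<Rightarrow> (nat \<Rightarrow> real measure) \<Rightarrow> bool" where
  "large_market \<epsilon> k n M \<longleftrightarrow>
     (\<forall>i<n. \<forall>q\<in>{0<..<1}. ereal (rev_curve (M i) q) \<le> ereal \<epsilon> * OPT k n M)"

end

theory Submission
  imports Defs
begin

lemma OPT_nonneg: "0 \<le> OPT k n M"
proof -
  let ?x = "\<lambda>(i::nat) (v::nat\<Rightarrow>real). 0::real"
  have "(?x, ?x) \<in> {(x, p). feasible k n x \<and> well_defined_mech n M x p \<and> BIC_IIR n M x p}"
    by (simp add: feasible_def well_defined_mech_def BIC_IIR_def interim_util_def)
  hence "ereal (revenue n M (snd (?x,?x))) \<le> OPT k n M"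
    unfolding OPT_def by (rule SUP_upper)
  thus ?thesis by (simp add: revenue_def zero_ereal_def)
qed

lemma quantile_ge:
  assumes "prob_space M" "sets M = sets borel" "0 < q" "q < 1" "cdf M p < 1 - q"
  shows "p \<le> quantile_value M q"
proof -
  interpret real_distribution M using assms by (simp add: real_distribution_def real_distribution_axioms_def)
  have lim: "((\<lambda>v. measure M {..v}) \<longlongrightarrow> 1) at_top"
    using cdf_lim_at_top_prob by (simp add: Distribution_Functions.cdf_def)
  have "eventually (\<lambda>v. measure M {..v} > 1 - q) at_top"
    using order_tendstoD(1)[OF lim, of "1 - q"] assms by simp
  then obtain v where "measure M {..v} > 1 - q" by (auto simp: eventually_at_top_linorder)
  hence ne: "{v. cdf M v \<ge> 1 - q} \<noteq> {}" by (auto simp: Defs.cdf_def intro!: exI[of _ v])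
  have "\<forall>v\<in>{v. cdf M v \<ge> 1 - q}. p \<le> v"
  proof
    fix v assume "v \<in> {v. cdf M v \<ge> 1 - q}"
    hence "cdf M v \<ge> 1 - q" by simp
    show "p \<le> v"
    proof (rule ccontr)
      assume "\<not> p \<le> v"
      hence "measure M {..v} \<le> measure M {..p}"
        by (intro finite_measure_mono) auto
      thus False using \<open>cdf M v \<ge> 1 - q\<close> assms(5) by (simp add: Defs.cdf_def)
    qed
  qed
  thus ?thesis unfolding quantile_value_def using ne by (intro cInf_greatest) auto
qed

theorem corollary3p4:
  fixes k n :: nat and \<epsilon> \<gamma> :: real and M :: "nat \<Rightarrow> real measure"
  assumes "k \<ge> 1"
    and "0 < \<epsilon>" and "\<epsilon> \<le> 1"
    and "auction_instance n M"
    and "\<forall>i<n. quasi_regular (M i)"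
    and "large_market \<epsilon> k n M"
    and "AP k n M = 1"
    and "\<forall>n' G. auction_instance n' G \<and> (\<forall>i<n'. quasi_regular (G i)) \<longrightarrow>
            OPT k n' G \<le> ereal (\<gamma> * ln (real k)) * AP k n' G"
  shows "\<forall>p\<ge>1 / real k. \<forall>i<n. cdf (M i) p \<ge> 1 - \<epsilon> * \<gamma> * real k * ln (real k)"
proof (intro allI impI)
  fix p i assume p: "p \<ge> 1 / real k" and i: "i < n"
  let ?C = "\<gamma> * ln (real k)"
  have opt: "OPT k n M \<le> ereal ?C" using assms(4,5,7,8) by (metis mult.comm_neutral one_ereal_def)
  hence C0: "0 \<le> ?C" using OPT_nonneg[of k n M] by (metis ereal_less_eq(5) order_trans)
  have kp: "0 < real k" using assms(1) by simp
  have pp: "0 < p" using p kp by (meson divide_pos_pos less_le_trans zero_less_one)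
  have pk: "1 \<le> p * real k" using p kp by (simp add: field_simps)
  have ps: "prob_space (M i)" "sets (M i) = sets borel"
    using assms(4) i by (auto simp: auction_instance_def)
  have F0: "0 \<le> cdf (M i) p" by (simp add: Defs.cdf_def)
  have rc: "rev_curve (M i) q \<le> \<epsilon> * ?C" if "q \<in> {0<..<1}" for q
  proof -
    have "ereal (rev_curve (M i) q) \<le> ereal \<epsilon> * OPT k n M"
      using assms(6) i that by (simp add: large_market_def)
    also have "\<dots> \<le> ereal \<epsilon> * ereal ?C"
      using opt assms(2) by (intro ereal_mult_left_mono) auto
    finally show ?thesis by simp
  qed
  have E0: "0 \<le> \<epsilon> * ?C * real k" using C0 assms(2) by simp
  show "cdf (M i) p \<ge> 1 - \<epsilon> * \<gamma> * real k * ln (real k)"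
  proof (cases "cdf (M i) p < 1")
    case False thus ?thesis using E0 by (simp add: mult.commute mult.left_commute)
  next
    case True
    have "1 - cdf (M i) p \<le> \<epsilon> * ?C / p"
    proof (rule dense_le_bounded[of 0])
      show "0 < 1 - cdf (M i) p" using True by simp
    next
      fix w assume w: "0 < w" "w < 1 - cdf (M i) p"
      hence w1: "w < 1" using F0 by simp
      have "p \<le> quantile_value (M i) w"
        using quantile_ge[OF ps w(1) w1] w by simp
      hence "w * p \<le> rev_curve (M i) w" using w by (simp add: rev_curve_def)
      also have "\<dots> \<le> \<epsilon> * ?C" using rc w w1 by simp
      finally show "w \<le> \<epsilon> * ?C / p" using pp by (simp add: field_simps)
    qed
    also have "\<epsilon> * ?C / p \<le> \<epsilon> * ?C * real k"
    proof -
      have "\<epsilon> * ?C = \<epsilon> * ?C * 1" by simp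
      also have "\<dots> \<le> \<epsilon> * ?C * (p * real k)" using pk C0 assms(2)
        by (intro mult_left_mono) auto
      finally show ?thesis using pp by (simp add: field_simps)
    qed
    finally show ?thesis by (simp add: mult.commute mult.left_commute)
  qed
qed

end
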